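(* Let $b\in\Gamma^{*,\infty}_{A_p,\rho}(\mathbb R^{2d})$ be hypoelliptic, with hypoellipticity conditions (i) and (ii) holding with a constant $B$. Then for every $h>0$ there exists $C>0$ (resp. there exist $h,C>0$) such that $$|D^n_tD^\alpha_w(e^{-tb(w)})|\le C2^nh^{|\alpha|}A_\alpha\langle w\rangle^{-\rho|\alpha|}|b(w)|^ne^{-t\mathrm{Re}\,b(w)}\sum_{r=0}^{|\alpha|}\frac{|t|^r|b(w)|^r}{r!}$$ for all $\alpha\in\mathbb N^{2d}$, $n\in\mathbb N$, $t\in\mathbb R$, $w\in Q^c_B$. If the hypoellipticity conditions hold on all of $\mathbb R^{2d}$ (i.e. $B=0$), then the estimate holds for all $w\in\mathbb R^{2d}$.
   Context: Notation: $\mathbb N=\{0,1,\dots\}$, $\langle x\rangle=(1+|x|^2)^{1/2}$, $D^\alpha=i^{-|\alpha|}\partial^\alpha$, $w=(x,\xi)\in\mathbb R^{2d}$. Sequences $M_p,A_p$ positive with $M_0=M_1=A_0=A_1=1$; (M.1) $N_p^2\le N_{p-1}N_{p+1}$; (M.2) $N_p\le c_0H^p\min_{q\le p}N_{p-q}N_q$; (M.3) $\sum_{p>q}N_{p-1}/N_p\le c_0qN_q/N_{q+1}$; (M.3)' $\sum N_{p-1}/N_p<\infty$; (M.4) $N_p^2/p!^2\le(N_{p-1}/(p-1)!)(N_{p+1}/(p+1)!)$. Standing: $M_p$ satisfies (M.1),(M.2),(M.3); $A_p$ satisfies (M.1),(M.2),(M.3)',(M.4); $A_p\le cL^pM_p$;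 $\rho$ with $\rho_0\le\rho\le1$ (strict if inf not attained), $\rho_0=\inf\{r>0:\exists c,L,\ A_p\le cL^pM_p^r\}$. $A_\alpha=A_{|\alpha|}$, $M(\lambda)=\sup_p\ln_+(\lambda^p/M_p)$. $*$: Beurling $(M_p)$ or Roumieu $\{M_p\}$; "(resp. ...)" refers to Roumieu. $\Gamma^{(M_p),\infty}_{A_p,\rho}(\mathbb R^{2d})=\varinjlim_{m\to\infty}\varprojlim_{h\to0}$, $\Gamma^{\{M_p\},\infty}_{A_p,\rho}(\mathbb R^{2d})=\varinjlim_{h\to\infty}\varprojlim_{m\to0}$ of Banach spaces of $a\in C^\infty(\mathbb R^{2d})$ with finite $\sup|D^\alpha_\xi D^\beta_xa|\langle w\rangle^{\rho(|\alpha|+|\beta|)}e^{-M(m|\xi|)-M(m|x|)}/(h^{|\alpha|+|\beta|}A_\alpha A_\beta)$. $Q_t=\{(x,\xi):\langle x\rangle<t,\langle\xi\rangle<t\}$. Hypoellipticity with constant $B$: (i) there are $c,m>0$ (resp. for every $m>0$ there is $c>0$) with $|b(x,\xi)|\ge ce^{-M(m|x|)-M(m|\xi|)}$ on $Q^c_B$; (ii) for every $h>0$ there is $C$ (resp. there are $h,C$) with $|D^\alpha_\xi D^\beta_xb|\le Ch^{|\alpha|+|\beta|}|b|A_\alpha A_\beta\langle w\rangle^{-\rho(|\alpha|+|\beta|)}$ on $Q^c_B$. *)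

theory Defs
  imports "HOL-Analysis.Analysis"
begin

text \<open>Phase space: \<open>\<real>\<^sup>2\<^sup>d = \<real>\<^sup>d \<times> \<real>\<^sup>d\<close>, modelled as \<open>(real^'n) \<times> (real^'n)\<close>
  with points \<open>w = (x, \<xi>)\<close>; the dimension \<open>d = CARD('n)\<close> is arbitrary.\<close>

datatype ultra = Beurling | Roumieu

definition weight_seq :: "(nat \<Rightarrow> real) \<Rightarrow> bool" where
  "weight_seq N \<longleftrightarrow> (\<forall>p. N p > 0) \<and> N 0 = 1 \<and> N 1 = 1"

definition condM1 :: "(nat \<Rightarrow> real) \<Rightarrow> bool" where
  "condM1 N \<longleftrightarrow> (\<forall>p\<ge>1. (N p)\<^sup>2 \<le> N (p - 1) * N (p + 1))"

definition condM2 :: "(nat \<Rightarrow> real) \<Rightarrow> bool" where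
  "condM2 N \<longleftrightarrow> (\<exists>c0 H. \<forall>p q. q \<le> p \<longrightarrow> N p \<le> c0 * H ^ p * (N (p - q) * N q))"

text \<open>(M.3): \<open>\<Sum>\<^sub>p\<^sub>>\<^sub>q N\<^sub>p\<^sub>-\<^sub>1/N\<^sub>p \<le> c\<^sub>0 q N\<^sub>q/N\<^sub>q\<^sub>+\<^sub>1\<close> for \<open>q \<ge> 1\<close>
  (substituting \<open>p = q + 1 + k\<close>).\<close>
definition condM3 :: "(nat \<Rightarrow> real) \<Rightarrow> bool" where
  "condM3 N \<longleftrightarrow> (\<exists>c0. \<forall>q\<ge>1. summable (\<lambda>k. N (q + k) / N (q + k + 1)) \<and>
      (\<Sum>k. N (q + k) / N (q + k + 1)) \<le> c0 * real q * N q / N (q + 1))"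

definition condM3' :: "(nat \<Rightarrow> real) \<Rightarrow> bool" where
  "condM3' N \<longleftrightarrow> summable (\<lambda>p. N p / N (p + 1))"

definition condM4 :: "(nat \<Rightarrow> real) \<Rightarrow> bool" where
  "condM4 N \<longleftrightarrow> (\<forall>p\<ge>1. (N p / fact p)\<^sup>2 \<le>
      (N (p - 1) / fact (p - 1)) * (N (p + 1) / fact (p + 1)))"

definition assoc_fun :: "(nat \<Rightarrow> real) \<Rightarrow> real \<Rightarrow> real" where
  "assoc_fun M lam = (SUP p. max 0 (ln (lam ^ p / M p)))"

definition rho_set :: "(nat \<Rightarrow> real) \<Rightarrow> (nat \<Rightarrow> real) \<Rightarrow> real set" where
  "rho_set M A = {r. r > 0 \<and> (\<exists>c L. \<forall>p. A p \<le> c * L ^ p * M p powr r)}"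

definition rho0 :: "(nat \<Rightarrow> real) \<Rightarrow> (nat \<Rightarrow> real) \<Rightarrow> real" where
  "rho0 M A = Inf (rho_set M A)"

definition admissible_rho :: "(nat \<Rightarrow> real) \<Rightarrow> (nat \<Rightarrow> real) \<Rightarrow> real \<Rightarrow> bool" where
  "admissible_rho M A \<rho> \<longleftrightarrow> rho0 M A \<le> \<rho> \<and> \<rho> \<le> 1 \<and>
      (rho0 M A \<notin> rho_set M A \<longrightarrow> rho0 M A < \<rho>)"

definition jbr :: "'a::real_normed_vector \<Rightarrow> real" where
  "jbr v = sqrt (1 + (norm v)\<^sup>2)"

text \<open>Note \<open>norm (x, \<xi>) = sqrt (norm x\<^sup>2 + norm \<xi>\<^sup>2)\<close>, so \<open>jbr (x,\<xi>) = \<langle>w\<rangle>\<close>.\<close>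

definition Qbox :: "real \<Rightarrow> ((real^'n) \<times> (real^'n)) set" where
  "Qbox t = {(x, \<xi>). jbr x < t \<and> jbr \<xi> < t}"

definition dderiv :: "((real^'n) \<times> (real^'n)) \<Rightarrow> (((real^'n) \<times> (real^'n)) \<Rightarrow> complex)
    \<Rightarrow> ((real^'n) \<times> (real^'n)) \<Rightarrow> complex" where
  "dderiv v f = (\<lambda>w. vector_derivative (\<lambda>s. f (w + s *\<^sub>R v)) (at 0))"

definition ex :: "'n \<Rightarrow> (real^'n) \<times> (real^'n)" where
  "ex i = (axis i 1, 0)"

definition exi :: "'n \<Rightarrow> (real^'n) \<times> (real^'n)" where
  "exi i = (0, axis i 1)"

definition coord_dirs :: "((real^'n) \<times> (real^'n)) set" where
  "coord_dirs = range ex \<union> range exi"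

text \<open>A fixed enumeration of the coordinate indices (order is irrelevant for smooth functions).\<close>
definition idx_list :: "'n::finite list" where
  "idx_list = (SOME l. distinct l \<and> set l = UNIV)"

definition dirs_of :: "('n::finite \<Rightarrow> (real^'n) \<times> (real^'n)) \<Rightarrow> ('n \<Rightarrow> nat)
    \<Rightarrow> ((real^'n) \<times> (real^'n)) list" where
  "dirs_of e \<alpha> = concat (map (\<lambda>i. replicate (\<alpha> i) (e i)) idx_list)"

definition mlen :: "('n::finite \<Rightarrow> nat) \<Rightarrow> nat" where
  "mlen \<alpha> = (\<Sum>i\<in>UNIV. \<alpha> i)"

text \<open>\<open>D\<^sup>\<alpha>\<^sub>\<xi> D\<^sup>\<beta>\<^sub>x f\<close> with \<open>D = \<i>\<^sup>-\<^sup>1\<partial>\<close>.\<close>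
definition Dop :: "('n::finite \<Rightarrow> nat) \<Rightarrow> ('n \<Rightarrow> nat)
    \<Rightarrow> (((real^'n) \<times> (real^'n)) \<Rightarrow> complex) \<Rightarrow> ((real^'n) \<times> (real^'n)) \<Rightarrow> complex" where
  "Dop \<alpha> \<beta> f w = (- \<i>) ^ (mlen \<alpha> + mlen \<beta>) *
      foldr dderiv (dirs_of exi \<alpha> @ dirs_of ex \<beta>) f w"

definition smooth :: "(((real^'n::finite) \<times> (real^'n)) \<Rightarrow> complex) \<Rightarrow> bool" where
  "smooth f \<longleftrightarrow> (\<forall>vs. set vs \<subseteq> coord_dirs \<longrightarrow>
      continuous_on UNIV (foldr dderiv vs f) \<and>
      (\<forall>v\<in>coord_dirs. \<forall>w. (\<lambda>s. foldr dderiv vs f (w + s *\<^sub>R v)) differentiable (at 0)))"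

fun tderiv :: "nat \<Rightarrow> (real \<Rightarrow> complex) \<Rightarrow> real \<Rightarrow> complex" where
  "tderiv 0 g = g"
| "tderiv (Suc n) g = (\<lambda>t. vector_derivative (tderiv n g) (at t))"

definition Dtw_exp :: "nat \<Rightarrow> ('n::finite \<Rightarrow> nat) \<Rightarrow> ('n \<Rightarrow> nat)
    \<Rightarrow> (((real^'n) \<times> (real^'n)) \<Rightarrow> complex) \<Rightarrow> real \<Rightarrow> ((real^'n) \<times> (real^'n)) \<Rightarrow> complex" where
  "Dtw_exp n \<alpha> \<beta> b t w = (- \<i>) ^ n *
      tderiv n (\<lambda>s. Dop \<alpha> \<beta> (\<lambda>w'. exp (- (complex_of_real s * b w'))) w) t"

definition in_Gamma :: "ultra \<Rightarrow> (nat \<Rightarrow> real) \<Rightarrow> (nat \<Rightarrow> real) \<Rightarrow> real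
    \<Rightarrow> (((real^'n::finite) \<times> (real^'n)) \<Rightarrow> complex) \<Rightarrow> bool" where
  "in_Gamma kind M A \<rho> a \<longleftrightarrow> smooth a \<and>
    (let bnd = (\<lambda>m h C. \<forall>\<alpha> \<beta> x \<xi>.
        norm (Dop \<alpha> \<beta> a (x, \<xi>)) * jbr (x, \<xi>) powr (\<rho> * real (mlen \<alpha> + mlen \<beta>))
          * exp (- assoc_fun M (m * norm \<xi>) - assoc_fun M (m * norm x))
          / (h ^ (mlen \<alpha> + mlen \<beta>) * A (mlen \<alpha>) * A (mlen \<beta>)) \<le> C)
     in case kind of
       Beurling \<Rightarrow> (\<exists>m>0. \<forall>h>0. \<exists>C. bnd m h C)
     | Roumieu \<Rightarrow> (\<exists>h>0. \<forall>m>0. \<exists>C. bnd m h C))"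

definition hypo_i :: "ultra \<Rightarrow> (nat \<Rightarrow> real) \<Rightarrow> real
    \<Rightarrow> (((real^'n::finite) \<times> (real^'n)) \<Rightarrow> complex) \<Rightarrow> bool" where
  "hypo_i kind M B b \<longleftrightarrow>
    (let low = (\<lambda>c m. \<forall>x \<xi>. (x, \<xi>) \<notin> Qbox B \<longrightarrow>
        norm (b (x, \<xi>)) \<ge> c * exp (- assoc_fun M (m * norm x) - assoc_fun M (m * norm \<xi>)))
     in case kind of
       Beurling \<Rightarrow> (\<exists>c>0. \<exists>m>0. low c m)
     | Roumieu \<Rightarrow> (\<forall>m>0. \<exists>c>0. low c m))"

definition hypo_ii :: "ultra \<Rightarrow> (nat \<Rightarrow> real) \<Rightarrow> real \<Rightarrow> real
    \<Rightarrow> (((real^'n::finite) \<times> (real^'n)) \<Rightarrow> complex) \<Rightarrow> bool" where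
  "hypo_ii kind A \<rho> B b \<longleftrightarrow>
    (let est = (\<lambda>h C. \<forall>\<alpha> \<beta> x \<xi>. (x, \<xi>) \<notin> Qbox B \<longrightarrow>
        norm (Dop \<alpha> \<beta> b (x, \<xi>)) \<le> C * h ^ (mlen \<alpha> + mlen \<beta>) * norm (b (x, \<xi>))
          * A (mlen \<alpha>) * A (mlen \<beta>) * jbr (x, \<xi>) powr (- \<rho> * real (mlen \<alpha> + mlen \<beta>)))
     in case kind of
       Beurling \<Rightarrow> (\<forall>h>0. \<exists>C. est h C)
     | Roumieu \<Rightarrow> (\<exists>h>0. \<exists>C. est h C))"

definition hypoelliptic :: "ultra \<Rightarrow> (nat \<Rightarrow> real) \<Rightarrow> (nat \<Rightarrow> real) \<Rightarrow> real \<Rightarrow> real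
    \<Rightarrow> (((real^'n::finite) \<times> (real^'n)) \<Rightarrow> complex) \<Rightarrow> bool" where
  "hypoelliptic kind M A \<rho> B b \<longleftrightarrow> hypo_i kind M B b \<and> hypo_ii kind A \<rho> B b"

text \<open>Multi-index on \<open>\<real>\<^sup>2\<^sup>d\<close> is the pair \<open>(\<beta>, \<alpha>)\<close> (x-part, \<xi>-part), of length
  \<open>mlen \<alpha> + mlen \<beta>\<close>.\<close>
definition exp_estimate :: "(nat \<Rightarrow> real) \<Rightarrow> real \<Rightarrow> real
    \<Rightarrow> (((real^'n::finite) \<times> (real^'n)) \<Rightarrow> complex) \<Rightarrow> real \<Rightarrow> real \<Rightarrow> bool" where
  "exp_estimate A \<rho> B b h C \<longleftrightarrow>
    (\<forall>\<alpha> \<beta> n t w. w \<notin> Qbox B \<longrightarrow>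
       norm (Dtw_exp n \<alpha> \<beta> b t w) \<le>
         C * 2 ^ n * h ^ (mlen \<alpha> + mlen \<beta>) * A (mlen \<alpha> + mlen \<beta>)
         * jbr w powr (- \<rho> * real (mlen \<alpha> + mlen \<beta>))
         * norm (b w) ^ n * exp (- t * Re (b w))
         * (\<Sum>r\<le>mlen \<alpha> + mlen \<beta>. \<bar>t\<bar> ^ r * norm (b w) ^ r / fact r))"

end

theory Submission
  imports Defs "HOL-Library.Sublist" "HOL-Computational_Algebra.Polynomial"
begin


definition aa :: "(nat \<Rightarrow> real) \<Rightarrow> nat \<Rightarrow> real" where
  "aa A p = A p / fact p"

definition rr :: "(nat \<Rightarrow> real) \<Rightarrow> nat \<Rightarrow> real" where
  "rr A p = aa A (Suc p) / aa A p"

locale wseq =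
  fixes A :: "nat \<Rightarrow> real"
  assumes wA: "weight_seq A" and m4: "condM4 A"
begin

lemma A_pos: "A p > 0" using wA by (auto simp: weight_seq_def)

lemma aa_pos: "aa A p > 0" using A_pos by (simp add: aa_def)

lemma aa0: "aa A 0 = 1" and aa1: "aa A (Suc 0) = 1" using wA by (auto simp: weight_seq_def aa_def)

lemma rr_pos: "rr A p > 0" using aa_pos by (simp add: rr_def)

lemma aa_Suc: "aa A (Suc p) = aa A p * rr A p"
  using aa_pos[of p] by (simp add: rr_def)

lemma rr_step: "rr A p \<le> rr A (Suc p)"
proof -
  have "(A (Suc p) / fact (Suc p))\<^sup>2 \<le> (A (Suc p - 1) / fact (Suc p - 1)) * (A (Suc p + 1) / fact (Suc p + 1))"
    using m4[unfolded condM4_def, rule_format, of "Suc p"] by simp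
  hence "(aa A (Suc p))\<^sup>2 \<le> aa A p * aa A (Suc (Suc p))" by (simp add: aa_def)
  thus ?thesis using aa_pos[of p] aa_pos[of "Suc p"]
    by (simp add: rr_def divide_simps power2_eq_square mult.commute)
qed

lemma rr_mono: "p \<le> q \<Longrightarrow> rr A p \<le> rr A q"
  by (induction q rule: dec_induct) (use rr_step order_trans in blast)+

lemma rr0: "rr A 0 = 1" by (simp add: rr_def aa0 aa1)

lemma aa_super1: "aa A (Suc p) * aa A (Suc q) \<le> aa A (Suc (p + q))"
proof (induction p)
  case 0 then show ?case by (simp add: aa1)
next
  case (Suc p)
  have "aa A (Suc (Suc p)) * aa A (Suc q) = rr A (Suc p) * (aa A (Suc p) * aa A (Suc q))"
    by (simp add: aa_Suc[of "Suc p"] ac_simps)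
  also have "\<dots> \<le> rr A (Suc p) * aa A (Suc (p + q))"
    using Suc rr_pos by (intro mult_left_mono) (auto intro: less_imp_le)
  also have "\<dots> \<le> rr A (Suc (p + q)) * aa A (Suc (p + q))"
    using aa_pos rr_mono[of "Suc p" "Suc (p+q)"] by (intro mult_right_mono) (auto intro: less_imp_le)
  also have "\<dots> = aa A (Suc (Suc p + q))" by (simp add: aa_Suc[of "Suc (p+q)"] ac_simps)
  finally show ?case .
qed

lemma aa_super: "aa A p * aa A q \<le> aa A (p + q)"
proof (cases p)
  case 0 then show ?thesis by (simp add: aa0)
next
  case (Suc p')
  show ?thesis
  proof (cases q)
    case 0 then show ?thesis by (simp add: aa0)
  next
    case (Suc q')
    have "aa A (Suc p') * aa A (Suc q') \<le> aa A (Suc (p' + q'))" by (rule aa_super1)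
    also have "\<dots> \<le> aa A (Suc (p'+q')) * rr A (Suc (p'+q'))"
      using mult_left_mono[of 1 "rr A (Suc (p'+q'))" "aa A (Suc (p'+q'))"]
        aa_pos[of "Suc (p'+q')"] rr_mono[of 0 "Suc (p'+q')"] rr0 by simp
    also have "\<dots> = aa A (p + q)" using \<open>p = Suc p'\<close> Suc by (simp add: aa_Suc)
    finally show ?thesis using \<open>p = Suc p'\<close> Suc by simp
  qed
qed

lemma A_eq: "A p = aa A p * fact p" by (simp add: aa_def)

lemma A_super: "A p * A q \<le> A (p + q)"
proof -
  have f: "fact p * fact q \<le> (fact (p + q) :: real)"
  proof -
    have "fact p * fact (p + q - p) * ((p+q) choose p) = (fact (p+q) :: nat)"
      by (rule binomial_fact_lemma) simp
    hence "fact p * fact q \<le> (fact (p+q) :: nat)"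
      by (metis add_diff_cancel_left' dvd_imp_le dvd_triv_left fact_gt_zero)
    thus ?thesis by (metis of_nat_fact of_nat_le_iff of_nat_mult)
  qed
  have "A p * A q = (aa A p * aa A q) * (fact p * fact q)" by (simp add: A_eq ac_simps)
  also have "\<dots> \<le> aa A (p+q) * fact (p+q)"
    using aa_pos by (intro mult_mono aa_super f) (auto intro: less_imp_le mult_nonneg_nonneg)
  finally show ?thesis by (simp add: A_eq)
qed

lemma length_le_sum: "(\<forall>j\<in>set js. 1 \<le> j) \<Longrightarrow> length js \<le> sum_list (js::nat list)"
  by (induction js) auto

lemma block: "(\<forall>j\<in>set js. 1 \<le> j) \<Longrightarrow>
   prod_list (map (aa A) js) * (\<Prod>i\<in>{1..<length js}. rr A i) \<le> aa A (sum_list js)"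
proof (induction js)
  case Nil then show ?case by (simp add: aa0)
next
  case (Cons j js)
  show ?case
  proof (cases "js = []")
    case True then show ?thesis by simp
  next
    case False
    define k where "k = length js"
    define m where "m = sum_list js"
    have k1: "k \<ge> 1" using False by (cases js) (auto simp: k_def)
    have km: "k \<le> m" using Cons.prems length_le_sum[of js] by (simp add: k_def m_def)
    have IH: "prod_list (map (aa A) js) * (\<Prod>i\<in>{1..<k}. rr A i) \<le> aa A m"
      using Cons by (simp add: k_def m_def)
    have P: "(\<Prod>i\<in>{1..<Suc k}. rr A i) = (\<Prod>i\<in>{1..<k}. rr A i) * rr A k"
      using k1 by (simp add: prod.atLeastLessThan_Suc)
    have ppos: "0 \<le> (\<Prod>i\<in>{1..<k}. rr A i)" using rr_pos by (simp add: less_imp_le prod_nonneg)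
    have plpos: "0 \<le> prod_list (map (aa A) js)"
      by (induction js) (auto intro!: mult_nonneg_nonneg simp: less_imp_le aa_pos)
    obtain j' where j': "j = Suc j'" using Cons.prems by (cases j) auto
    have "prod_list (map (aa A) (j # js)) * (\<Prod>i\<in>{1..<length (j#js)}. rr A i)
        = aa A j * (prod_list (map (aa A) js) * (\<Prod>i\<in>{1..<k}. rr A i)) * rr A k"
      using k1 by (simp add: k_def[symmetric] P ac_simps)
    also have "\<dots> \<le> aa A j * aa A m * rr A k"
      using aa_pos rr_pos IH by (intro mult_right_mono mult_left_mono) (auto intro: less_imp_le)
    also have "\<dots> \<le> aa A j * aa A m * rr A m"
      using aa_pos rr_mono[OF km] by (intro mult_left_mono) (auto intro: less_imp_le)
    also have "\<dots> = aa A (Suc j') * aa A (Suc m)" by (simp add: j' aa_Suc ac_simps)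
    also have "\<dots> \<le> aa A (Suc (j' + m))" by (rule aa_super1)
    also have "\<dots> = aa A (sum_list (j # js))" by (simp add: j' m_def)
    finally show ?thesis .
  qed
qed

end

lemma (in wseq) rr_unbounded:
  assumes m3: "condM3' A"
  shows "\<exists>N. \<forall>p\<ge>N. D \<le> rr A p"
proof (rule ccontr)
  assume "\<not> ?thesis"
  hence H: "\<forall>N. \<exists>p\<ge>N. rr A p < D" by (auto simp: not_le)
  have bnd: "rr A p \<le> D" for p
    using H rr_mono by (meson le_less_trans less_imp_le)
  have D0: "D > 0" using bnd[of 0] rr0 by simp
  have rat: "A (Suc p) = A p * (rr A p * real (Suc p))" for p
    using aa_Suc[of p] by (simp add: A_eq ac_simps)
  have "summable (\<lambda>p. inverse (D * real (Suc p)))"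
  proof (rule summable_comparison_test)
    show "summable (\<lambda>p. A p / A (p + 1))" using m3 by (simp add: condM3'_def)
    show "\<exists>N. \<forall>n\<ge>N. norm (inverse (D * real (Suc n))) \<le> A n / A (n + 1)"
    proof (intro exI allI impI)
      fix n :: nat
      have "A n / A (n+1) = inverse (rr A n * real (Suc n))"
        using rat[of n] A_pos[of n] by (simp add: inverse_eq_divide del: of_nat_Suc)
      also have "inverse (D * real (Suc n)) \<le> \<dots>"
        using rr_pos[of n] bnd[of n] D0 by (intro le_imp_inverse_le mult_right_mono) auto
      finally show "norm (inverse (D * real (Suc n))) \<le> A n / A (n + 1)"
        using D0 by simp
    qed
  qed
  hence "summable (\<lambda>p. D * inverse (D * real (Suc p)))" by (rule summable_mult)
  hence "summable (\<lambda>p. inverse (real (Suc p)))" using D0 by simp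
  hence "summable (\<lambda>p. inverse (real p))"
    using summable_Suc_iff[of "\<lambda>p. inverse (real p)"] by simp
  thus False using not_summable_harmonic[where 'a=real] by simp
qed

lemma (in wseq) absorb:
  assumes m3: "condM3' A" and D0: "D \<ge> 0"
  shows "\<exists>E\<ge>1. \<forall>k. D ^ k \<le> E * (\<Prod>i\<in>{1..<k}. rr A i)"
proof -
  obtain N0 where N0: "\<forall>p\<ge>N0. D \<le> rr A p" using rr_unbounded[OF m3] by blast
  define N where "N = Suc N0"
  have N: "\<forall>p\<ge>N. D \<le> rr A p" "N \<ge> 1" using N0 by (auto simp: N_def)
  define P where "P k = (\<Prod>i\<in>{1..<k}. rr A i)" for k
  have Ppos: "P k > 0" for k using rr_pos by (simp add: P_def prod_pos)
  define E' where "E' = (\<Sum>j\<le>N. D ^ j / P j)"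
  have t0: "0 \<le> D ^ j / P j" for j using Ppos[of j] D0 by simp
  have main: "D ^ k / P k \<le> E'" for k
  proof (induction k)
    case 0 then show ?case unfolding E'_def
      using member_le_sum[of 0 "{..N}" "\<lambda>j. D ^ j / P j"] t0 by simp
  next
    case (Suc k)
    show ?case
    proof (cases "Suc k \<le> N")
      case True then show ?thesis unfolding E'_def
        using member_le_sum[of "Suc k" "{..N}" "\<lambda>j. D ^ j / P j"] t0 by simp
    next
      case False
      hence kN: "k \<ge> N" by simp
      have "P (Suc k) = P k * rr A k" using kN N(2) by (simp add: P_def prod.atLeastLessThan_Suc)
      hence "D ^ Suc k / P (Suc k) = (D ^ k / P k) * (D / rr A k)" by simp
      also have "\<dots> \<le> (D ^ k / P k) * 1"
        using N(1) kN rr_pos[of k] t0[of k] by (intro mult_left_mono) auto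
      finally show ?thesis using Suc by simp
    qed
  qed
  show ?thesis
  proof (intro exI conjI allI)
    show "1 \<le> E' + 1" using t0 by (simp add: E'_def sum_nonneg)
    fix k
    have "D ^ k \<le> E' * P k" using main[of k] Ppos[of k] by (simp add: divide_le_eq)
    also have "\<dots> \<le> (E' + 1) * P k" using Ppos[of k] by simp
    finally show "D ^ k \<le> (E' + 1) * (\<Prod>i\<in>{1..<k}. rr A i)" by (simp add: P_def)
  qed
qed



fun parts :: "'a list \<Rightarrow> 'a list list list" where
  "parts [] = [[]]"
| "parts (v # vs) = concat (map (\<lambda>P. ([v] # P) # map (\<lambda>i. P[i := v # P ! i]) [0..<length P]) (parts vs))"

lemma sum_list_update_nat:
  "i < length xs \<Longrightarrow> sum_list (map f (xs[i := y])) + f (xs ! i) = sum_list (map f xs) + (f y :: nat)"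
  by (induction xs arbitrary: i) (auto split: nat.splits)

lemma prod_list_update:
  "i < length xs \<Longrightarrow> prod_list (map f (xs[i := y])) * f (xs ! i) = prod_list (map f xs) * (f y :: 'b::comm_monoid_mult)"
  by (induction xs arbitrary: i) (auto split: nat.splits simp: ac_simps)

lemma parts_props:
  "P \<in> set (parts L) \<Longrightarrow> sum_list (map length P) = length L \<and> (\<forall>B\<in>set P. B \<noteq> [] \<and> subseq B L)
     \<and> length P \<le> length L"
proof (induction L arbitrary: P)
  case Nil then show ?case by simp
next
  case (Cons v vs)
  then obtain P0 where P0: "P0 \<in> set (parts vs)"
    and P': "P \<in> set (([v] # P0) # map (\<lambda>i. P0[i := v # P0 ! i]) [0..<length P0])" by auto
  from P' have P: "P = [v] # P0 \<or> (\<exists>i<length P0. P = P0[i := v # P0 ! i])" by auto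
  from Cons.IH[OF P0] have IH: "sum_list (map length P0) = length vs"
    "\<forall>B\<in>set P0. B \<noteq> [] \<and> subseq B vs" "length P0 \<le> length vs" by auto
  from P show ?case
  proof
    assume "P = [v] # P0" then show ?thesis using IH by auto
  next
    assume "\<exists>i<length P0. P = P0[i := v # P0 ! i]"
    then obtain i where i: "i < length P0" and Pe: "P = P0[i := v # P0 ! i]" by auto
    have "sum_list (map length P) + length (P0 ! i) = sum_list (map length P0) + Suc (length (P0 ! i))"
      using sum_list_update_nat[OF i, of length "v # P0 ! i"] by (simp add: Pe)
    hence s: "sum_list (map length P) = Suc (length vs)" using IH by simp
    have "\<forall>B\<in>set P. B \<noteq> [] \<and> subseq B (v # vs)"
    proof
      fix B assume "B \<in> set P"
      hence "B \<in> insert (v # P0 ! i) (set P0)" using set_update_subset_insert Pe by fastforce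
      moreover have "subseq (P0 ! i) vs" using IH(2) i by auto
      ultimately show "B \<noteq> [] \<and> subseq B (v # vs)" using IH(2) by auto
    qed
    thus ?thesis using s IH(3) Pe by simp
  qed
qed

definition WW :: "'a list list \<Rightarrow> real" where
  "WW P = prod_list (map (\<lambda>B. fact (length B)) P)"

definition FF :: "'a list \<Rightarrow> nat \<Rightarrow> real" where
  "FF L k = sum_list (map (\<lambda>P. if length P = k then WW P else 0) (parts L))"

lemma WW_pos: "WW P > 0"
  unfolding WW_def by (induction P) auto

lemma FF_zero: "k > length L \<Longrightarrow> FF L k = 0"
proof -
  assume "k > length L"
  hence "\<forall>P\<in>set (parts L). length P \<noteq> k" using parts_props by fastforce
  hence "map (\<lambda>P. if length P = k then WW P else 0) (parts L) = map (\<lambda>P. 0) (parts L)"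
    by auto
  thus ?thesis unfolding FF_def by (simp only:) simp
qed

lemma WW_update: "i < length P \<Longrightarrow> WW (P[i := v # P ! i]) = WW P * (real (length (P ! i)) + 1)"
proof -
  assume i: "i < length P"
  have "WW (P[i := v # P ! i]) * fact (length (P ! i)) = WW P * fact (Suc (length (P ! i)))"
    unfolding WW_def using prod_list_update[OF i, of "\<lambda>B. fact (length B)" "v # P ! i"]
    by (simp del: fact_Suc)
  also have "WW P * fact (Suc (length (P ! i))) = (WW P * (real (length (P ! i)) + 1)) * fact (length (P ! i))"
    by (simp add: algebra_simps)
  finally have "WW (P[i := v # P ! i]) * fact (length (P ! i)) = (WW P * (real (length (P ! i)) + 1)) * fact (length (P ! i))" .
  thus ?thesis using fact_gt_zero[of "length (P ! i)", where 'a=real]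
    by (metis less_irrefl mult_right_cancel)
qed

lemma sum_list_map_concat:
  "sum_list (map f (concat xss)) = sum_list (map (\<lambda>xs. sum_list (map f xs)) xss)"
  by (induction xss) auto

lemma FF_Cons: "FF (v # vs) k = (if k \<ge> 1 then FF vs (k - 1) else 0) + (real (length vs) + real k) * FF vs k"
proof -
  define g where "g P = (if length P = k then WW P else 0)" for P :: "'a list list"
  have inner: "sum_list (map g (([v] # P) # map (\<lambda>i. P[i := v # P ! i]) [0..<length P]))
      = (if k \<ge> 1 \<and> length P = k - 1 then WW P else 0) + (real (length vs) + real k) * g P"
    if P: "P \<in> set (parts vs)" for P
  proof -
    have sl: "sum_list (map length P) = length vs" using parts_props[OF P] by simp
    have "sum_list (map g (map (\<lambda>i. P[i := v # P ! i]) [0..<length P]))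
        = (\<Sum>i\<in>{0..<length P}. g (P[i := v # P ! i]))"
      using sum_set_upt_conv_sum_list_nat[of "\<lambda>i. g (P[i := v # P ! i])" 0 "length P"] by (simp add: o_def)
    also have "\<dots> = (\<Sum>i\<in>{0..<length P}. (if length P = k then WW P * (real (length (P ! i)) + 1) else 0))"
      by (intro sum.cong) (auto simp: g_def WW_update)
    also have "\<dots> = (if length P = k then WW P * ((\<Sum>i\<in>{0..<length P}. real (length (P ! i))) + real (length P)) else 0)"
      by (auto simp: sum_distrib_left[symmetric] sum.distrib)
    also have "(\<Sum>i\<in>{0..<length P}. real (length (P ! i))) = real (length vs)"
    proof -
      have "(\<Sum>i\<in>{0..<length P}. real (length (P ! i))) = real (\<Sum>i\<in>{0..<length P}. length (P ! i))" by simp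
      also have "(\<Sum>i\<in>{0..<length P}. length (P ! i)) = sum_list (map length P)"
        by (simp add: sum_list_sum_nth)
      finally show ?thesis using sl by simp
    qed
    also have "(if length P = k then WW P * (real (length vs) + real (length P)) else 0) = (real (length vs) + real k) * g P"
      by (simp add: g_def ac_simps)
    finally have "sum_list (map g (map (\<lambda>i. P[i := v # P ! i]) [0..<length P])) = (real (length vs) + real k) * g P" .
    moreover have "g ([v] # P) = (if k \<ge> 1 \<and> length P = k - 1 then WW P else 0)"
      by (auto simp: g_def WW_def)
    ultimately show ?thesis by simp
  qed
  have "FF (v # vs) k = sum_list (map (\<lambda>P. sum_list (map g (([v] # P) # map (\<lambda>i. P[i := v # P ! i]) [0..<length P]))) (parts vs))"
    by (simp add: FF_def g_def[abs_def] sum_list_map_concat o_def)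
  also have "\<dots> = sum_list (map (\<lambda>P. (if k \<ge> 1 \<and> length P = k - 1 then WW P else 0) + (real (length vs) + real k) * g P) (parts vs))"
    by (intro arg_cong[where f=sum_list] map_cong refl) (erule inner)
  also have "\<dots> = sum_list (map (\<lambda>P. (if k \<ge> 1 \<and> length P = k - 1 then WW P else 0)) (parts vs)) + (real (length vs) + real k) * sum_list (map g (parts vs))"
    by (simp add: sum_list_addf sum_list_const_mult)
  also have "sum_list (map (\<lambda>P. (if k \<ge> 1 \<and> length P = k - 1 then WW P else 0)) (parts vs)) = (if k \<ge> 1 then FF vs (k - 1) else 0)"
    by (auto simp: FF_def)
  finally show ?thesis by (simp add: FF_def g_def[abs_def])
qed

lemma FF_nonneg: "FF L k \<ge> 0"
  unfolding FF_def by (induction "parts L") (auto intro!: sum_list_nonneg simp: WW_pos less_imp_le)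

lemma FF_bound: "FF L k \<le> 3 ^ length L * fact (length L) / fact k"
proof (induction L arbitrary: k)
  case Nil
  show ?case by (cases k) (auto simp: FF_def WW_def)
next
  case (Cons v vs)
  define m where "m = length vs"
  define X where "X = (3 ^ m * fact m / fact k :: real)"
  have X0: "X \<ge> 0" by (simp add: X_def)
  have t2: "(real m + real k) * FF vs k \<le> (if k \<le> m then (real m + real k) * X else 0)"
  proof (cases "k \<le> m")
    case True
    have "(real m + real k) * FF vs k \<le> (real m + real k) * X"
      using Cons.IH[of k] by (intro mult_left_mono) (auto simp: X_def m_def)
    thus ?thesis using True by simp
  next
    case False thus ?thesis using FF_zero[of vs k] by (simp add: m_def)
  qed
  have t1: "(if k \<ge> 1 then FF vs (k - 1) else 0) \<le> (if k \<ge> 1 \<and> k \<le> Suc m then real k * X else 0)"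
  proof (cases "k \<ge> 1 \<and> k \<le> Suc m")
    case True
    have "FF vs (k - 1) \<le> 3 ^ m * fact m / fact (k - 1)" using Cons.IH[of "k-1"] by (simp add: m_def)
    also have "\<dots> = real k * X"
    proof -
      have "fact k = real k * fact (k - 1)" using True
        using fact_reduce[of k, where 'a=real] True by simp
      thus ?thesis using True by (simp add: X_def field_simps)
    qed
    finally show ?thesis using True by simp
  next
    case False
    thus ?thesis using FF_zero[of vs "k-1"] by (auto simp: m_def)
  qed
  have "FF (v # vs) k \<le> (if k \<ge> 1 \<and> k \<le> Suc m then real k * X else 0) + (if k \<le> m then (real m + real k) * X else 0)"
    using FF_Cons[of v vs k] t1 t2 by (simp add: m_def)
  also have "\<dots> \<le> 3 * (real m + 1) * X"
  proof -
    have a: "(if k \<ge> 1 \<and> k \<le> Suc m then real k * X else 0) \<le> (if k \<le> Suc m then real k * X else 0)"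
      using X0 by auto
    have "(if k \<le> Suc m then real k * X else 0) + (if k \<le> m then (real m + real k) * X else 0)
        \<le> 3 * (real m + 1) * X"
    proof (cases "k \<le> m")
      case True
      hence "real k \<le> real m" by simp
      hence "real k + (real m + real k) \<le> 3 * (real m + 1)" by simp
      hence "(real k + (real m + real k)) * X \<le> 3 * (real m + 1) * X" using X0 by (rule mult_right_mono)
      thus ?thesis using True by (simp add: algebra_simps)
    next
      case False
      show ?thesis
      proof (cases "k \<le> Suc m")
        case True
        hence "real k \<le> 3 * (real m + 1)" by simp
        hence "real k * X \<le> 3 * (real m + 1) * X" using X0 by (rule mult_right_mono)
        thus ?thesis using True False by simp
      next
        case False2: False
        thus ?thesis using False X0 by simp
      qed
    qed
    thus ?thesis using a by linarith
  qed
  also have "\<dots> = 3 ^ length (v # vs) * fact (length (v # vs)) / fact k"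
    by (simp add: X_def m_def field_simps)
  finally show ?case .
qed

lemma subseq_concat_rep:
  "distinct l \<Longrightarrow> subseq xs (concat (map (\<lambda>i. replicate (\<alpha> i) (e i)) l)) \<Longrightarrow>
   \<exists>\<alpha>'. xs = concat (map (\<lambda>i. replicate (\<alpha>' i) (e i)) l)"
proof (induction l arbitrary: xs)
  case Nil then show ?case by simp
next
  case (Cons i l)
  from Cons.prems(2) obtain xs1 xs2 where x: "xs = xs1 @ xs2"
    and s1: "subseq xs1 (replicate (\<alpha> i) (e i))" and s2: "subseq xs2 (concat (map (\<lambda>i. replicate (\<alpha> i) (e i)) l))"
    by (auto elim: subseq_appendE)
  obtain \<alpha>' where a: "xs2 = concat (map (\<lambda>i. replicate (\<alpha>' i) (e i)) l)"
    using Cons.IH[OF _ s2] Cons.prems(1) by auto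
  have "\<forall>y\<in>set xs1. y = e i"
  proof
    fix y assume "y \<in> set xs1"
    then obtain z where "z \<in> set (replicate (\<alpha> i) (e i))" "y = z" using list_emb_set[OF s1] by metis
    thus "y = e i" by simp
  qed
  hence "xs1 = replicate (length xs1) (e i)" using replicate_length_same by metis
  then obtain n where xs1: "xs1 = replicate n (e i)" by blast
  have "i \<notin> set l" using Cons.prems(1) by simp
  hence mc: "map (\<lambda>j. replicate ((\<alpha>'(i := n)) j) (e j)) l = map (\<lambda>j. replicate (\<alpha>' j) (e j)) l"
    by (intro map_cong) auto
  have "xs = replicate ((\<alpha>'(i := n)) i) (e i) @ concat (map (\<lambda>j. replicate ((\<alpha>'(i := n)) j) (e j)) l)"
    unfolding mc using x a xs1 by simp
  hence "xs = concat (map (\<lambda>j. replicate ((\<alpha>'(i := n)) j) (e j)) (i # l))"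
    by simp
  thus ?case by blast
qed

lemma idx_list_props: "distinct (idx_list :: 'n::finite list) \<and> set (idx_list :: 'n list) = UNIV"
proof -
  have "\<exists>l. distinct l \<and> set l = (UNIV :: 'n set)" using finite_distinct_list[of "UNIV :: 'n set"] by auto
  from someI_ex[OF this] show ?thesis unfolding idx_list_def by simp
qed

lemma length_dirs_of: "length (dirs_of e \<alpha>) = mlen \<alpha>"
proof -
  have g: "length (concat (map (\<lambda>i. replicate (\<alpha> i) (e i)) l)) = sum_list (map \<alpha> l)" for l :: "'a list"
    by (induction l) auto
  have "length (dirs_of e \<alpha>) = sum_list (map \<alpha> idx_list)"
    unfolding dirs_of_def by (rule g)
  also have "\<dots> = sum \<alpha> (set idx_list)" using idx_list_props by (metis sum_list_distinct_conv_sum_set)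
  finally show ?thesis using idx_list_props[where 'n='a] by (simp add: mlen_def)
qed

lemma subseq_dirs:
  assumes "subseq B (dirs_of exi \<alpha> @ dirs_of ex \<beta>)"
  shows "\<exists>\<alpha>' \<beta>'. B = dirs_of exi \<alpha>' @ dirs_of ex \<beta>' \<and> length B = mlen \<alpha>' + mlen \<beta>'"
proof -
  obtain B1 B2 where B: "B = B1 @ B2" "subseq B1 (dirs_of exi \<alpha>)" "subseq B2 (dirs_of ex \<beta>)"
    using assms by (auto elim: subseq_appendE)
  obtain \<alpha>' where "B1 = dirs_of exi \<alpha>'"
    using subseq_concat_rep[OF _ B(2)[unfolded dirs_of_def]] idx_list_props unfolding dirs_of_def by blast
  moreover obtain \<beta>' where "B2 = dirs_of ex \<beta>'"
    using subseq_concat_rep[OF _ B(3)[unfolded dirs_of_def]] idx_list_props unfolding dirs_of_def by blast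
  ultimately show ?thesis using B(1) by (metis length_append length_dirs_of)
qed

lemma dirs_coord: "set (dirs_of exi \<alpha> @ dirs_of ex \<beta>) \<subseteq> coord_dirs"
  unfolding dirs_of_def coord_dirs_def by auto



type_synonym 'n pt = "(real^'n) \<times> (real^'n)"

definition ldiff :: "'n::finite pt \<Rightarrow> ('n pt \<Rightarrow> complex) \<Rightarrow> bool" where
  "ldiff v f \<longleftrightarrow> (\<forall>w. (\<lambda>s. f (w + s *\<^sub>R v)) differentiable (at 0))"

lemma dd_has: "ldiff v f \<Longrightarrow> ((\<lambda>s. f (w + s *\<^sub>R v)) has_vector_derivative dderiv v f w) (at 0)"
  unfolding ldiff_def dderiv_def using vector_derivative_works by blast

lemma dd_unique: "((\<lambda>s. f (w + s *\<^sub>R v)) has_vector_derivative D) (at 0) \<Longrightarrow> dderiv v f w = D"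
  by (simp add: dderiv_def vector_derivative_at)

lemma ldiffI: "(\<And>w. ((\<lambda>s. f (w + s *\<^sub>R v)) has_vector_derivative D w) (at 0)) \<Longrightarrow> ldiff v f"
  unfolding ldiff_def using differentiableI_vector by blast

lemma ldiff_mult:
  assumes "ldiff v f" "ldiff v g"
  shows "ldiff v (\<lambda>w. f w * g w)"
    "dderiv v (\<lambda>w. f w * g w) w = dderiv v f w * g w + f w * dderiv v g w"
proof -
  have H: "((\<lambda>s. f (w + s *\<^sub>R v) * g (w + s *\<^sub>R v)) has_vector_derivative
      (dderiv v f w * g w + f w * dderiv v g w)) (at 0)" for w
    using has_vector_derivative_mult[OF dd_has[OF assms(1)] dd_has[OF assms(2)], of w w]
    by (simp add: ac_simps)
  show "ldiff v (\<lambda>w. f w * g w)" by (rule ldiffI[OF H])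
  show "dderiv v (\<lambda>w. f w * g w) w = dderiv v f w * g w + f w * dderiv v g w"
    by (rule dd_unique[OF H])
qed

lemma ldiff_const: "ldiff v (\<lambda>w. c)" "dderiv v (\<lambda>w. c) w = 0"
proof -
  have H: "((\<lambda>s. c) has_vector_derivative 0) (at 0)" by simp
  show "ldiff v (\<lambda>w. c)" by (rule ldiffI) (rule H)
  show "dderiv v (\<lambda>w. c) w = 0" by (rule dd_unique) (rule H)
qed

lemma ldiff_add:
  assumes "ldiff v f" "ldiff v g"
  shows "ldiff v (\<lambda>w. f w + g w)"
    "dderiv v (\<lambda>w. f w + g w) w = dderiv v f w + dderiv v g w"
proof -
  have H: "((\<lambda>s. f (w + s *\<^sub>R v) + g (w + s *\<^sub>R v)) has_vector_derivative
      (dderiv v f w + dderiv v g w)) (at 0)" for w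
    using has_vector_derivative_add[OF dd_has[OF assms(1)] dd_has[OF assms(2)]] by simp
  show "ldiff v (\<lambda>w. f w + g w)" by (rule ldiffI[OF H])
  show "dderiv v (\<lambda>w. f w + g w) w = dderiv v f w + dderiv v g w"
    by (rule dd_unique[OF H])
qed

lemma ldiff_cmult:
  assumes "ldiff v f"
  shows "ldiff v (\<lambda>w. c * f w)" "dderiv v (\<lambda>w. c * f w) w = c * dderiv v f w"
  using ldiff_mult[OF ldiff_const(1) assms, of c] ldiff_const(2)[of v c] by auto

lemma ldiff_sum_list:
  assumes "\<forall>x\<in>set xs. ldiff v (F x)"
  shows "ldiff v (\<lambda>w. sum_list (map (\<lambda>x. F x w) xs))"
    "dderiv v (\<lambda>w. sum_list (map (\<lambda>x. F x w) xs)) w = sum_list (map (\<lambda>x. dderiv v (F x) w) xs)"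
  using assms
proof (induction xs arbitrary: w)
  case Nil
  { case 1 then show ?case using ldiff_const by simp }
  { case 2 then show ?case using ldiff_const by simp }
next
  case (Cons x xs)
  { case 1 then show ?case using Cons.IH(1) ldiff_add(1)[of v "F x"] by simp }
  { case 2 then show ?case using Cons.IH ldiff_add[of v "F x" "\<lambda>w. sum_list (map (\<lambda>x. F x w) xs)"] by simp }
qed

lemma ldiff_prod_list:
  assumes "\<forall>f\<in>set fs. ldiff v f"
  shows "ldiff v (\<lambda>w. prod_list (map (\<lambda>f. f w) fs))"
    "dderiv v (\<lambda>w. prod_list (map (\<lambda>f. f w) fs)) w
      = (\<Sum>i<length fs. prod_list (map (\<lambda>f. f w) (fs[i := dderiv v (fs ! i)])))"
  using assms
proof (induction fs arbitrary: w)
  case Nil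
  { case 1 then show ?case using ldiff_const by simp }
  { case 2 then show ?case using ldiff_const by simp }
next
  case (Cons f fs)
  { case 1 then show ?case using Cons.IH(1) ldiff_mult(1)[of v f] by simp }
  { case 2
    have "dderiv v (\<lambda>w. prod_list (map (\<lambda>f. f w) (f # fs))) w
        = dderiv v f w * prod_list (map (\<lambda>f. f w) fs) + f w * dderiv v (\<lambda>w. prod_list (map (\<lambda>f. f w) fs)) w"
      using 2 Cons.IH(1) ldiff_mult(2)[of v f "\<lambda>w. prod_list (map (\<lambda>f. f w) fs)"] by simp
    also have "\<dots> = dderiv v f w * prod_list (map (\<lambda>f. f w) fs)
        + (\<Sum>i<length fs. f w * prod_list (map (\<lambda>f. f w) (fs[i := dderiv v (fs ! i)])))"
      using 2 Cons.IH(2) by (simp add: sum_distrib_left)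
    also have "\<dots> = (\<Sum>i<length (f # fs). prod_list (map (\<lambda>f. f w) ((f # fs)[i := dderiv v ((f # fs) ! i)])))"
      unfolding length_Cons sum.lessThan_Suc_shift by simp
    finally show ?case . }
qed

lemma ldiff_exp:
  assumes "ldiff v b"
  shows "ldiff v (\<lambda>w. exp (- (T * b w)))"
    "dderiv v (\<lambda>w. exp (- (T * b w))) w = exp (- (T * b w)) * (- (T * dderiv v b w))"
proof -
  have H: "((\<lambda>s. exp (- (T * b (w + s *\<^sub>R v)))) has_vector_derivative
      (exp (- (T * b w)) * (- (T * dderiv v b w)))) (at 0)" for w
  proof -
    have i: "((\<lambda>s. - (T * b (w + s *\<^sub>R v))) has_vector_derivative (- (T * dderiv v b w))) (at 0)"
      using has_vector_derivative_mult_right[OF dd_has[OF assms], of T w]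
      by (intro has_vector_derivative_minus) simp
    have "((exp \<circ> (\<lambda>s. - (T * b (w + s *\<^sub>R v)))) has_vector_derivative
        (- (T * dderiv v b w)) * exp (- (T * b (w + 0 *\<^sub>R v)))) (at 0)"
      by (rule field_vector_diff_chain_at[OF i]) (rule DERIV_exp)
    thus ?thesis by (simp add: o_def ac_simps)
  qed
  show "ldiff v (\<lambda>w. exp (- (T * b w)))" by (rule ldiffI[OF H])
  show "dderiv v (\<lambda>w. exp (- (T * b w))) w = exp (- (T * b w)) * (- (T * dderiv v b w))"
    by (rule dd_unique[OF H])
qed

lemma ldiff_partial:
  "smooth b \<Longrightarrow> set B \<subseteq> coord_dirs \<Longrightarrow> v \<in> coord_dirs \<Longrightarrow> ldiff v (foldr dderiv B b)"
  unfolding smooth_def ldiff_def by blast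

definition XX :: "('n::finite pt \<Rightarrow> complex) \<Rightarrow> 'n pt list list \<Rightarrow> 'n pt \<Rightarrow> complex" where
  "XX b P w = prod_list (map (\<lambda>B. foldr dderiv B b w) P)"

definition SS :: "('n::finite pt \<Rightarrow> complex) \<Rightarrow> complex \<Rightarrow> 'n pt list \<Rightarrow> 'n pt \<Rightarrow> complex" where
  "SS b T L w = sum_list (map (\<lambda>P. (- T) ^ length P * XX b P w) (parts L))"

lemma blocks_sub: "P \<in> set (parts L) \<Longrightarrow> B \<in> set P \<Longrightarrow> set B \<subseteq> set L"
proof
  fix x assume P: "P \<in> set (parts L)" and B: "B \<in> set P" and x: "x \<in> set B"
  have "subseq B L" using parts_props[OF P] B by blast
  from list_emb_set[OF this x] show "x \<in> set L" by auto
qed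

lemma XX_ldiff:
  assumes b: "smooth b" and L: "set L \<subseteq> coord_dirs" and P: "P \<in> set (parts L)" and v: "v \<in> coord_dirs"
  shows "ldiff v (XX b P)"
    "dderiv v (XX b P) w = (\<Sum>i<length P. XX b (P[i := v # P ! i]) w)"
proof -
  have fs: "\<forall>f\<in>set (map (\<lambda>B. foldr dderiv B b) P). ldiff v f"
    using ldiff_partial[OF b _ v] blocks_sub[OF P] L by fastforce
  have e: "XX b Q = (\<lambda>w. prod_list (map (\<lambda>f. f w) (map (\<lambda>B. foldr dderiv B b) Q)))" for Q
    by (simp add: XX_def[abs_def] o_def)
  show "ldiff v (XX b P)" unfolding e by (rule ldiff_prod_list(1)[OF fs])
  show "dderiv v (XX b P) w = (\<Sum>i<length P. XX b (P[i := v # P ! i]) w)"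
    unfolding e ldiff_prod_list(2)[OF fs] by (simp add: map_update)
qed

lemma SS_ldiff:
  assumes b: "smooth b" and L: "set L \<subseteq> coord_dirs" and v: "v \<in> coord_dirs"
  shows "ldiff v (SS b T L)"
    "dderiv v (SS b T L) w = sum_list (map (\<lambda>P. (- T) ^ length P * (\<Sum>i<length P. XX b (P[i := v # P ! i]) w)) (parts L))"
proof -
  have e: "SS b T L = (\<lambda>w. sum_list (map (\<lambda>P. (\<lambda>w. (- T) ^ length P * XX b P w) w) (parts L)))"
    by (simp add: SS_def[abs_def])
  have F: "\<forall>P\<in>set (parts L). ldiff v (\<lambda>w. (- T) ^ length P * XX b P w)"
    using ldiff_cmult(1)[OF XX_ldiff(1)[OF b L _ v]] by blast
  show "ldiff v (SS b T L)" unfolding e by (rule ldiff_sum_list(1)[OF F])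
  show "dderiv v (SS b T L) w = sum_list (map (\<lambda>P. (- T) ^ length P * (\<Sum>i<length P. XX b (P[i := v # P ! i]) w)) (parts L))"
    unfolding e ldiff_sum_list(2)[OF F]
    using ldiff_cmult(2)[OF XX_ldiff(1)[OF b L _ v]] XX_ldiff(2)[OF b L _ v]
    by (intro arg_cong[where f=sum_list] map_cong refl) simp
qed

lemma exp_formula:
  assumes b: "smooth b" and L: "set L \<subseteq> coord_dirs"
  shows "foldr dderiv L (\<lambda>w. exp (- (T * b w))) = (\<lambda>w. exp (- (T * b w)) * SS b T L w)"
  using L
proof (induction L)
  case Nil
  show ?case by (simp add: SS_def XX_def)
next
  case (Cons v L)
  have v: "v \<in> coord_dirs" and L': "set L \<subseteq> coord_dirs" using Cons.prems by auto
  have bv: "ldiff v b" using ldiff_partial[OF b, of "[]" v] v by simp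
  show ?case
  proof
    fix w
    have "foldr dderiv (v # L) (\<lambda>w. exp (- (T * b w))) w = dderiv v (\<lambda>w. exp (- (T * b w)) * SS b T L w) w"
      using Cons.IH[OF L'] by simp
    also have "\<dots> = exp (- (T * b w)) * (- (T * dderiv v b w)) * SS b T L w + exp (- (T * b w)) * dderiv v (SS b T L) w"
      using ldiff_mult(2)[OF ldiff_exp(1)[OF bv] SS_ldiff(1)[OF b L' v]] ldiff_exp(2)[OF bv] by simp
    also have "\<dots> = exp (- (T * b w)) * SS b T (v # L) w"
    proof -
      have "SS b T (v # L) w = sum_list (map (\<lambda>P. (- T) ^ Suc (length P) * XX b ([v] # P) w
           + sum_list (map (\<lambda>Q. (- T) ^ length Q * XX b Q w) (map (\<lambda>i. P[i := v # P ! i]) [0..<length P]))) (parts L))"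
        by (simp add: SS_def sum_list_map_concat o_def)
      also have "\<dots> = sum_list (map (\<lambda>P. (- (T * dderiv v b w)) * ((- T) ^ length P * XX b P w)
           + (- T) ^ length P * (\<Sum>i<length P. XX b (P[i := v # P ! i]) w)) (parts L))"
      proof (intro arg_cong[where f=sum_list] map_cong refl)
        fix P
        have "sum_list (map (\<lambda>Q. (- T) ^ length Q * XX b Q w) (map (\<lambda>i. P[i := v # P ! i]) [0..<length P]))
            = (\<Sum>i<length P. (- T) ^ length P * XX b (P[i := v # P ! i]) w)"
          using sum_set_upt_conv_sum_list_nat[of "\<lambda>i. (- T) ^ length P * XX b (P[i := v # P ! i]) w" 0 "length P"]
          by (simp add: o_def lessThan_atLeast0)
        thus "(- T) ^ Suc (length P) * XX b ([v] # P) w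
           + sum_list (map (\<lambda>Q. (- T) ^ length Q * XX b Q w) (map (\<lambda>i. P[i := v # P ! i]) [0..<length P]))
          = (- (T * dderiv v b w)) * ((- T) ^ length P * XX b P w)
           + (- T) ^ length P * (\<Sum>i<length P. XX b (P[i := v # P ! i]) w)"
          by (simp add: XX_def sum_distrib_left ac_simps)
      qed
      also have "\<dots> = (- (T * dderiv v b w)) * SS b T L w + dderiv v (SS b T L) w"
        unfolding SS_ldiff(2)[OF b L' v] SS_def
        by (simp add: sum_list_addf sum_list_const_mult sum_list_subtractf)
      finally have h: "SS b T (v # L) w = (- (T * dderiv v b w)) * SS b T L w + dderiv v (SS b T L) w" .
      show ?thesis unfolding h by (simp only: distrib_left mult.assoc)
    qed
    finally show "foldr dderiv (v # L) (\<lambda>w. exp (- (T * b w))) w = exp (- (T * b w)) * SS b T (v # L) w" .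
  qed
qed



fun Qs :: "complex poly \<Rightarrow> complex \<Rightarrow> nat \<Rightarrow> complex poly" where
  "Qs q \<beta> 0 = q"
| "Qs q \<beta> (Suc n) = pderiv (Qs q \<beta> n) - smult \<beta> (Qs q \<beta> n)"

lemma tderiv_formula:
  "tderiv n (\<lambda>s. K * (exp (- (of_real s * \<beta>)) * poly q (of_real s)))
   = (\<lambda>s. K * (exp (- (of_real s * \<beta>)) * poly (Qs q \<beta> n) (of_real s)))"
proof (induction n)
  case 0 then show ?case by simp
next
  case (Suc n)
  define p where "p = Qs q \<beta> n"
  have D: "((\<lambda>z. K * (exp (- (z * \<beta>)) * poly p z)) has_field_derivative
      K * (exp (- (z * \<beta>)) * poly (Qs q \<beta> (Suc n)) z)) (at z)" for z
  proof -
    have "((\<lambda>z. K * (exp (- (z * \<beta>)) * poly p z)) has_field_derivative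
      K * (exp (- (z * \<beta>)) * (- \<beta>) * poly p z + exp (- (z * \<beta>)) * poly (pderiv p) z)) (at z)"
      by (rule derivative_eq_intros poly_DERIV refl | simp)+
    thus ?thesis by (simp add: p_def algebra_simps)
  qed
  show ?case
  proof
    fix t
    have "((\<lambda>s. K * (exp (- (of_real s * \<beta>)) * poly p (of_real s))) has_vector_derivative
        K * (exp (- (of_real t * \<beta>)) * poly (Qs q \<beta> (Suc n)) (of_real t))) (at t)"
      using has_vector_derivative_real_field[OF D[of "of_real t"]] by simp
    thus "tderiv (Suc n) (\<lambda>s. K * (exp (- (of_real s * \<beta>)) * poly q (of_real s))) t
        = K * (exp (- (of_real t * \<beta>)) * poly (Qs q \<beta> (Suc n)) (of_real t))"
      using Suc by (simp add: p_def vector_derivative_at)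
  qed
qed

lemma Qs_degree: "degree (Qs q \<beta> n) \<le> degree q"
proof (induction n)
  case 0 then show ?case by simp
next
  case (Suc n)
  have "degree (pderiv (Qs q \<beta> n)) \<le> degree q" using Suc by (simp add: degree_pderiv)
  moreover have "degree (smult \<beta> (Qs q \<beta> n)) \<le> degree q" using Suc degree_smult_le order_trans by blast
  ultimately show ?case by (simp add: degree_diff_le)
qed

lemma Qs_coeff:
  assumes H: "\<And>k. norm (coeff q k) \<le> Kc * norm \<beta> ^ k / fact k"
  shows "norm (coeff (Qs q \<beta> n) k) \<le> Kc * (2 * norm \<beta>) ^ n * norm \<beta> ^ k / fact k"
proof (induction n arbitrary: k)
  case 0 then show ?case using H by simp
next
  case (Suc n)
  define r where "r = norm \<beta>"
  have r0: "r \<ge> 0" by (simp add: r_def)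
  have "coeff (Qs q \<beta> (Suc n)) k = of_nat (Suc k) * coeff (Qs q \<beta> n) (Suc k) - \<beta> * coeff (Qs q \<beta> n) k"
    by (simp add: coeff_pderiv)
  hence "norm (coeff (Qs q \<beta> (Suc n)) k) \<le> real (Suc k) * norm (coeff (Qs q \<beta> n) (Suc k)) + r * norm (coeff (Qs q \<beta> n) k)"
    by (metis norm_triangle_ineq4 norm_mult norm_of_nat r_def)
  also have "\<dots> \<le> real (Suc k) * (Kc * (2 * r) ^ n * r ^ Suc k / fact (Suc k)) + r * (Kc * (2 * r) ^ n * r ^ k / fact k)"
    using Suc[of "Suc k"] Suc[of k] r0 unfolding r_def by (intro add_mono mult_left_mono) auto
  also have "real (Suc k) * (Kc * (2 * r) ^ n * r ^ Suc k / fact (Suc k)) = Kc * (2 * r) ^ n * r ^ Suc k / fact k"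
    by (simp only: fact_Suc of_nat_mult) (simp add: field_simps del: of_nat_Suc)
  also have "Kc * (2 * r) ^ n * r ^ Suc k / fact k + r * (Kc * (2 * r) ^ n * r ^ k / fact k) = Kc * (2 * r) ^ Suc n * r ^ k / fact k"
    by (simp add: field_simps)
  finally show ?case by (simp add: r_def)
qed

lemma poly_bound:
  assumes "degree p \<le> m"
  shows "norm (poly p (of_real t :: complex)) \<le> (\<Sum>k\<le>m. norm (coeff p k) * \<bar>t\<bar> ^ k)"
proof -
  have "poly p (of_real t) = (\<Sum>k\<le>m. coeff p k * of_real t ^ k)"
    unfolding poly_altdef
    by (rule sum.mono_neutral_left) (use assms in \<open>auto simp: coeff_eq_0\<close>)
  also have "norm \<dots> \<le> (\<Sum>k\<le>m. norm (coeff p k * of_real t ^ k))" by (rule norm_sum)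
  also have "\<dots> = (\<Sum>k\<le>m. norm (coeff p k) * \<bar>t\<bar> ^ k)" by (simp add: norm_mult norm_power)
  finally show ?thesis .
qed

lemma tbound:
  assumes H: "\<And>k. norm (coeff q k) \<le> Kc * norm \<beta> ^ k / fact k" and dq: "degree q \<le> m"
    and K: "norm K = 1"
  shows "norm (tderiv n (\<lambda>s. K * (exp (- (of_real s * \<beta>)) * poly q (of_real s))) t)
     \<le> Kc * 2 ^ n * norm \<beta> ^ n * exp (- t * Re \<beta>) * (\<Sum>r\<le>m. \<bar>t\<bar> ^ r * norm \<beta> ^ r / fact r)"
proof -
  have dQ: "degree (Qs q \<beta> n) \<le> m" using Qs_degree dq order_trans by blast
  have "norm (tderiv n (\<lambda>s. K * (exp (- (of_real s * \<beta>)) * poly q (of_real s))) t)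
      = exp (- t * Re \<beta>) * norm (poly (Qs q \<beta> n) (of_real t))"
    unfolding tderiv_formula by (simp add: norm_mult K norm_exp_eq_Re)
  also have "\<dots> \<le> exp (- t * Re \<beta>) * (\<Sum>k\<le>m. (Kc * (2 * norm \<beta>) ^ n * norm \<beta> ^ k / fact k) * \<bar>t\<bar> ^ k)"
  proof (rule mult_left_mono)
    have "(\<Sum>k\<le>m. norm (coeff (Qs q \<beta> n) k) * \<bar>t\<bar> ^ k) \<le> (\<Sum>k\<le>m. (Kc * (2 * norm \<beta>) ^ n * norm \<beta> ^ k / fact k) * \<bar>t\<bar> ^ k)"
      by (rule sum_mono, rule mult_right_mono[OF Qs_coeff[OF H]]) simp
    thus "norm (poly (Qs q \<beta> n) (of_real t)) \<le> (\<Sum>k\<le>m. (Kc * (2 * norm \<beta>) ^ n * norm \<beta> ^ k / fact k) * \<bar>t\<bar> ^ k)"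
      using poly_bound[OF dQ, of t] by linarith
    show "0 \<le> exp (- t * Re \<beta>)" by simp
  qed
  also have "\<dots> = Kc * 2 ^ n * norm \<beta> ^ n * exp (- t * Re \<beta>) * (\<Sum>r\<le>m. \<bar>t\<bar> ^ r * norm \<beta> ^ r / fact r)"
    by (simp add: sum_distrib_left power_mult_distrib ac_simps)
  finally show ?thesis .
qed



lemma norm_prod_list_le:
  fixes f :: "'a \<Rightarrow> complex"
  shows "(\<forall>B\<in>set P. norm (f B) \<le> g B) \<Longrightarrow> norm (prod_list (map f P)) \<le> prod_list (map g P)"
proof (induction P)
  case Nil then show ?case by simp
next
  case (Cons x P)
  have "norm (prod_list (map f (x # P))) = norm (f x) * norm (prod_list (map f P))" by (simp add: norm_mult)
  also have "\<dots> \<le> g x * prod_list (map g P)"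
    using Cons order_trans[OF norm_ge_zero, of "f x" "g x"] by (intro mult_mono) auto
  finally show ?case by simp
qed

lemma norm_sum_list_le:
  fixes f :: "'a \<Rightarrow> complex"
  shows "norm (sum_list (map f xs)) \<le> sum_list (map (\<lambda>x. norm (f x)) xs)"
proof (induction xs)
  case Nil then show ?case by simp
next
  case (Cons x xs) then show ?case using norm_triangle_ineq[of "f x" "sum_list (map f xs)"] by simp
qed

lemma prod_list_split:
  "prod_list (map (\<lambda>B. c * z ^ length B * F B) P) = c ^ length P * z ^ sum_list (map length P) * prod_list (map F P)"
  for c z :: real
  by (induction P) (auto simp: power_add ac_simps)

lemma coeff_sum_list: "coeff (sum_list (map f xs)) k = sum_list (map (\<lambda>x. coeff (f x) k) xs)"
  by (induction xs) auto

lemma poly_sum_list: "poly (sum_list (map f xs)) z = sum_list (map (\<lambda>x. poly (f x) z) xs)"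
  by (induction xs) auto

lemma (in wseq) prod_A: "prod_list (map (\<lambda>B. A (length B)) P) = prod_list (map (aa A) (map length P)) * WW P"
proof (induction P)
  case Nil then show ?case by (simp add: WW_def)
next
  case (Cons x P)
  have "A (length x) = aa A (length x) * fact (length x)" by (rule A_eq)
  then show ?case using Cons.IH by (simp add: WW_def ac_simps)
qed

lemma jbr_pos: "jbr w > 0"
  by (simp add: jbr_def add_pos_nonneg)

lemma Jp_lemma: "jbr w powr (- \<rho> * real k) = (jbr w powr (- \<rho>)) ^ k"
proof -
  have "jbr w powr (- \<rho> * real k) = (jbr w powr (- \<rho>)) powr (real k)" by (simp add: powr_powr)
  also have "\<dots> = (jbr w powr (- \<rho>)) ^ k" using jbr_pos[of w] by (intro powr_realpow) simp
  finally show ?thesis .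
qed

definition est_ii where
  "est_ii A \<rho> B b h C \<longleftrightarrow> (\<forall>\<alpha> \<beta> x \<xi>. (x, \<xi>) \<notin> Qbox B \<longrightarrow>
        norm (Dop \<alpha> \<beta> b (x, \<xi>)) \<le> C * h ^ (mlen \<alpha> + mlen \<beta>) * norm (b (x, \<xi>))
          * A (mlen \<alpha>) * A (mlen \<beta>) * jbr (x, \<xi>) powr (- \<rho> * real (mlen \<alpha> + mlen \<beta>)))"

lemma (in wseq) blk_lemma:
  fixes b :: "'n::finite pt \<Rightarrow> complex"
  assumes est: "est_ii A \<rho> B b h C" and C1: "C \<le> C1" "C1 \<ge> 1" and h: "h > 0"
    and wB: "w \<notin> Qbox B" and P: "P \<in> set (parts (dirs_of exi \<alpha> @ dirs_of ex \<beta>))" and Bl: "Bl \<in> set P"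
  shows "norm (foldr dderiv Bl b w) \<le> C1 * norm (b w) * (h * jbr w powr (- \<rho>)) ^ length Bl * A (length Bl)"
proof -
  define J where "J = jbr w powr (- \<rho>)"
  define r where "r = norm (b w)"
  have J0: "J > 0" using jbr_pos[of w] by (simp add: J_def)
  have r0: "r \<ge> 0" by (simp add: r_def)
  have "subseq Bl (dirs_of exi \<alpha> @ dirs_of ex \<beta>)" using parts_props[OF P] Bl by auto
  then obtain \<alpha>' \<beta>' where ab: "Bl = dirs_of exi \<alpha>' @ dirs_of ex \<beta>'" "length Bl = mlen \<alpha>' + mlen \<beta>'"
    using subseq_dirs by blast
  have D: "Dop \<alpha>' \<beta>' b w = (- \<i>) ^ (mlen \<alpha>' + mlen \<beta>') * foldr dderiv Bl b w"
    by (simp add: Dop_def ab(1))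
  have "norm (foldr dderiv Bl b w) = norm (Dop \<alpha>' \<beta>' b w)" by (simp add: D norm_mult norm_power)
  also have "\<dots> \<le> C * h ^ (mlen \<alpha>' + mlen \<beta>') * r * A (mlen \<alpha>') * A (mlen \<beta>') * jbr w powr (- \<rho> * real (mlen \<alpha>' + mlen \<beta>'))"
    using est wB unfolding est_ii_def r_def by (metis prod.collapse)
  also have "\<dots> = C * (h ^ length Bl * r * (A (mlen \<alpha>') * A (mlen \<beta>')) * J ^ length Bl)"
    by (simp only: ab(2)[symmetric] Jp_lemma J_def mult.assoc)
  also have "\<dots> \<le> C1 * (h ^ length Bl * r * A (mlen \<alpha>' + mlen \<beta>') * J ^ length Bl)"
  proof (rule mult_mono)
    show "C \<le> C1" by (rule C1(1))
    show "h ^ length Bl * r * (A (mlen \<alpha>') * A (mlen \<beta>')) * J ^ length Bl \<le> h ^ length Bl * r * A (mlen \<alpha>' + mlen \<beta>') * J ^ length Bl"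
      using A_super[of "mlen \<alpha>'" "mlen \<beta>'"] h r0 J0 by (intro mult_right_mono mult_left_mono) auto
    show "0 \<le> C1" using C1(2) by simp
    show "0 \<le> h ^ length Bl * r * (A (mlen \<alpha>') * A (mlen \<beta>')) * J ^ length Bl"
      using h r0 J0 A_pos by (intro mult_nonneg_nonneg) (auto intro: less_imp_le)
  qed
  also have "\<dots> = C1 * r * (h * J) ^ length Bl * A (length Bl)"
    by (simp only: ab(2) power_mult_distrib ac_simps)
  finally show ?thesis by (simp add: r_def J_def)
qed


lemma (in wseq) XXb_lemma:
  fixes b :: "'n::finite pt \<Rightarrow> complex"
  assumes est: "est_ii A \<rho> B b h C" and C1: "C \<le> C1" "C1 \<ge> 1" and h: "h > 0"
    and E: "E \<ge> 1" "\<And>k. C1 ^ k \<le> E * (\<Prod>i\<in>{1..<k}. rr A i)"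
    and wB: "w \<notin> Qbox B" and L: "L = dirs_of exi \<alpha> @ dirs_of ex \<beta>" and P: "P \<in> set (parts L)"
  shows "norm (XX b P w) \<le> E * aa A (length L) * (h * jbr w powr (- \<rho>)) ^ length L * norm (b w) ^ length P * WW P"
proof -
  define J where "J = jbr w powr (- \<rho>)"
  define r where "r = norm (b w)"
  define m where "m = length L"
  have J0: "J > 0" using jbr_pos[of w] by (simp add: J_def)
  have r0: "r \<ge> 0" by (simp add: r_def)
  have pp: "sum_list (map length P) = m" "\<forall>B\<in>set P. B \<noteq> []" using parts_props[OF P] by (auto simp: m_def)
  have blk: "\<forall>Bl\<in>set P. norm (foldr dderiv Bl b w) \<le> C1 * r * (h * J) ^ length Bl * A (length Bl)"
    using blk_lemma[OF est C1 h wB P[unfolded L]] by (simp add: r_def J_def)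
  have "norm (XX b P w) \<le> prod_list (map (\<lambda>B. C1 * r * (h * J) ^ length B * A (length B)) P)"
    unfolding XX_def using blk by (intro norm_prod_list_le) auto
  also have "\<dots> = (C1 * r) ^ length P * (h * J) ^ m * (prod_list (map (aa A) (map length P)) * WW P)"
    by (simp only: prod_list_split pp prod_A)
  also have "\<dots> = (r ^ length P * (h * J) ^ m * WW P) * (C1 ^ length P * prod_list (map (aa A) (map length P)))"
    by (simp add: power_mult_distrib ac_simps)
  also have "\<dots> \<le> (r ^ length P * (h * J) ^ m * WW P) * (E * aa A m)"
  proof (rule mult_left_mono)
    have js: "\<forall>j\<in>set (map length P). 1 \<le> j" using pp by (auto simp: Suc_le_eq)
    have pa: "0 \<le> prod_list (map (aa A) (map length P))"
      by (induction P) (auto intro!: mult_nonneg_nonneg simp: less_imp_le aa_pos)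
    have "C1 ^ length P * prod_list (map (aa A) (map length P))
        \<le> E * (\<Prod>i\<in>{1..<length P}. rr A i) * prod_list (map (aa A) (map length P))"
      using E(2) pa by (rule mult_right_mono)
    also have "\<dots> = E * (prod_list (map (aa A) (map length P)) * (\<Prod>i\<in>{1..<length (map length P)}. rr A i))"
      by simp
    also have "\<dots> \<le> E * aa A (sum_list (map length P))"
      using E(1) block[OF js] by (intro mult_left_mono) auto
    finally show "C1 ^ length P * prod_list (map (aa A) (map length P)) \<le> E * aa A m"
      using pp by simp
    show "0 \<le> r ^ length P * (h * J) ^ m * WW P"
      using r0 h J0 WW_pos[of P] by (intro mult_nonneg_nonneg) auto
  qed
  finally show ?thesis by (simp add: r_def J_def m_def ac_simps)
qed


lemma (in wseq) core:
  fixes b :: "'n::finite pt \<Rightarrow> complex"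
  assumes m3: "condM3' A" and sm: "smooth b" and h: "h > 0" and est: "est_ii A \<rho> B b h C"
  shows "\<exists>C'>0. exp_estimate A \<rho> B b (3 * h) C'"
proof -
  define C1 where "C1 = max C 1"
  have C1: "C \<le> C1" "C1 \<ge> 1" by (auto simp: C1_def)
  obtain E where E: "E \<ge> 1" "\<And>k. C1 ^ k \<le> E * (\<Prod>i\<in>{1..<k}. rr A i)"
    using absorb[OF m3, of C1] C1 by auto
  have "exp_estimate A \<rho> B b (3 * h) E"
    unfolding exp_estimate_def
  proof (intro allI impI)
    fix \<alpha> \<beta> :: "'n \<Rightarrow> nat" and n :: nat and t :: real and w :: "'n pt"
    assume wB: "w \<notin> Qbox B"
    define L where "L = dirs_of exi \<alpha> @ dirs_of ex \<beta>"
    define m where "m = mlen \<alpha> + mlen \<beta>"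
    have mL: "length L = m" by (simp add: L_def m_def length_dirs_of)
    have Lc: "set L \<subseteq> coord_dirs" unfolding L_def by (rule dirs_coord)
    define J where "J = jbr w powr (- \<rho>)"
    define r where "r = norm (b w)"
    have J0: "J > 0" using jbr_pos[of w] by (simp add: J_def)
    have r0: "r \<ge> 0" by (simp add: r_def)
    have XXb: "norm (XX b P w) \<le> E * aa A m * (h * J) ^ m * r ^ length P * WW P"
      if P: "P \<in> set (parts L)" for P
      using XXb_lemma[OF est C1 h E wB L_def P] by (simp add: mL J_def r_def)
    define q where "q = sum_list (map (\<lambda>P. monom ((- 1) ^ length P * XX b P w) (length P)) (parts L))"
    have cq: "coeff q k = sum_list (map (\<lambda>P. if length P = k then (- 1) ^ k * XX b P w else 0) (parts L))" for k
      unfolding q_def coeff_sum_list by (intro arg_cong[where f=sum_list] map_cong refl) (simp add: coeff_monom)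
    define Kc where "Kc = E * A m * (3 * h) ^ m * J ^ m"
    have cb: "norm (coeff q k) \<le> Kc * norm (b w) ^ k / fact k" for k
    proof -
      define c where "c = E * aa A m * (h * J) ^ m * r ^ k"
      have c0: "c \<ge> 0" using E(1) aa_pos[of m] h J0 r0 by (simp add: c_def)
      have "norm (coeff q k) \<le> sum_list (map (\<lambda>P. norm (if length P = k then (- 1) ^ k * XX b P w else 0)) (parts L))"
        unfolding cq by (rule norm_sum_list_le)
      also have "\<dots> \<le> sum_list (map (\<lambda>P. c * (if length P = k then WW P else 0)) (parts L))"
      proof (rule sum_list_mono)
        fix P assume P: "P \<in> set (parts L)"
        show "norm (if length P = k then (- 1) ^ k * XX b P w else 0) \<le> c * (if length P = k then WW P else 0)"
          using XXb[OF P] by (auto simp: norm_mult norm_power c_def)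
      qed
      also have "\<dots> = c * FF L k"
        by (simp add: FF_def sum_list_const_mult)
      also have "\<dots> \<le> c * (3 ^ m * fact m / fact k)"
        using FF_bound[of L k] c0 mL by (intro mult_left_mono) auto
      also have "\<dots> = Kc * norm (b w) ^ k / fact k"
        by (simp add: c_def Kc_def A_eq[of m] r_def power_mult_distrib)
      finally show ?thesis .
    qed
    have dq: "degree q \<le> m"
    proof (rule degree_le, intro allI impI)
      fix k assume "m < k"
      hence "\<forall>P\<in>set (parts L). length P \<noteq> k" using parts_props mL by fastforce
      hence "map (\<lambda>P. if length P = k then (- 1) ^ k * XX b P w else 0) (parts L) = map (\<lambda>P. 0) (parts L)"
        by auto
      thus "coeff q k = 0" unfolding cq by (simp only:) simp
    qed
    have pq: "poly q T = SS b T L w" for T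
      unfolding q_def poly_sum_list SS_def
    proof (intro arg_cong[where f=sum_list] map_cong refl)
      fix P :: "'n pt list list"
      have e: "(- T) ^ length P = (- 1) ^ length P * T ^ length P"
        by (metis mult_minus1 power_mult_distrib)
      show "poly (monom ((- 1) ^ length P * XX b P w) (length P)) T = (- T) ^ length P * XX b P w"
        unfolding poly_monom e by (simp only: mult_ac)
    qed
    have G: "(\<lambda>s. Dop \<alpha> \<beta> (\<lambda>w'. exp (- (complex_of_real s * b w'))) w)
        = (\<lambda>s. (- \<i>) ^ m * (exp (- (of_real s * b w)) * poly q (of_real s)))"
    proof
      fix s :: real
      show "Dop \<alpha> \<beta> (\<lambda>w'. exp (- (complex_of_real s * b w'))) w
          = (- \<i>) ^ m * (exp (- (of_real s * b w)) * poly q (of_real s))"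
        unfolding Dop_def L_def[symmetric] m_def[symmetric] exp_formula[OF sm Lc] pq by simp
    qed
    have "norm (Dtw_exp n \<alpha> \<beta> b t w) = norm (tderiv n (\<lambda>s. (- \<i>) ^ m * (exp (- (of_real s * b w)) * poly q (of_real s))) t)"
      unfolding Dtw_exp_def G by (simp add: norm_mult norm_power)
    also have "\<dots> \<le> Kc * 2 ^ n * norm (b w) ^ n * exp (- t * Re (b w)) * (\<Sum>r\<le>m. \<bar>t\<bar> ^ r * norm (b w) ^ r / fact r)"
      by (rule tbound[OF cb dq]) (simp add: norm_power)
    also have "\<dots> = E * 2 ^ n * (3 * h) ^ (mlen \<alpha> + mlen \<beta>) * A (mlen \<alpha> + mlen \<beta>)
         * jbr w powr (- \<rho> * real (mlen \<alpha> + mlen \<beta>))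
         * norm (b w) ^ n * exp (- t * Re (b w))
         * (\<Sum>r\<le>mlen \<alpha> + mlen \<beta>. \<bar>t\<bar> ^ r * norm (b w) ^ r / fact r)"
    proof -
      have jm: "jbr w powr (- \<rho> * real m) = J ^ m" unfolding J_def by (rule Jp_lemma)
      show ?thesis unfolding m_def[symmetric] jm Kc_def by (simp only: mult_ac)
    qed
    finally show "norm (Dtw_exp n \<alpha> \<beta> b t w) \<le> E * 2 ^ n * (3 * h) ^ (mlen \<alpha> + mlen \<beta>) * A (mlen \<alpha> + mlen \<beta>)
         * jbr w powr (- \<rho> * real (mlen \<alpha> + mlen \<beta>))
         * norm (b w) ^ n * exp (- t * Re (b w))
         * (\<Sum>r\<le>mlen \<alpha> + mlen \<beta>. \<bar>t\<bar> ^ r * norm (b w) ^ r / fact r)" .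
  qed
  thus ?thesis using E(1) by (intro exI[of _ E]) auto
qed


theorem lemma7p5:
  fixes kind :: ultra and M A :: "nat \<Rightarrow> real" and \<rho> B :: real
    and b :: "(real^'n::finite) \<times> (real^'n) \<Rightarrow> complex"
  assumes "weight_seq M" "condM1 M" "condM2 M" "condM3 M"
    and "weight_seq A" "condM1 A" "condM2 A" "condM3' A" "condM4 A"
    and "\<exists>c L. \<forall>p. A p \<le> c * L ^ p * M p"
    and "admissible_rho M A \<rho>"
    and "in_Gamma kind M A \<rho> b"
    and "hypoelliptic kind M A \<rho> B b"
  shows "case kind of
           Beurling \<Rightarrow> (\<forall>h>0. \<exists>C>0. exp_estimate A \<rho> B b h C)
         | Roumieu \<Rightarrow> (\<exists>h>0. \<exists>C>0. exp_estimate A \<rho> B b h C)"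
proof -
  interpret wseq A using assms(5) assms(9) by (rule wseq.intro)
  have sm: "smooth b" using assms(12) by (simp add: in_Gamma_def)
  have ii: "hypo_ii kind A \<rho> B b" using assms(13) by (simp add: hypoelliptic_def)
  show ?thesis
  proof (cases kind)
    case Beurling
    have H: "\<forall>h>0. \<exists>C. est_ii A \<rho> B b h C"
      using ii unfolding hypo_ii_def est_ii_def Let_def Beurling by simp
    have "\<forall>h>0. \<exists>C>0. exp_estimate A \<rho> B b h C"
    proof (intro allI impI)
      fix h :: real assume h: "h > 0"
      obtain C where "est_ii A \<rho> B b (h / 3) C" using H h by (meson divide_pos_pos zero_less_numeral)
      from core[OF assms(8) sm _ this] h show "\<exists>C>0. exp_estimate A \<rho> B b h C" by simp
    qed
    thus ?thesis using Beurling by simp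
  next
    case Roumieu
    obtain h C where h: "h > 0" and e: "est_ii A \<rho> B b h C"
      using ii unfolding hypo_ii_def est_ii_def Let_def Roumieu by auto
    have "\<exists>C>0. exp_estimate A \<rho> B b (3 * h) C" by (rule core[OF assms(8) sm h e])
    moreover have "3 * h > 0" using h by simp
    ultimately have "\<exists>h>0. \<exists>C>0. exp_estimate A \<rho> B b h C" by blast
    thus ?thesis using Roumieu by simp
  qed
qed

end
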